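(* Let $X$ be a real Banach space and let $\mathcal{G}^0\subset\mathcal{G}_X$ be a subgroup such that $X$ is convex-transitive with respect to $\mathcal{G}^0$, i.e. $\overline{\mathrm{conv}}(\{T(x): T\in\mathcal{G}^0\})=B_X$ for every $x\in S_X$. Let $C\subset S_X$ be norm-dense in $S_X$, and let $A\subset X$ be a closed subspace whose density character $\kappa=\mathrm{dens}(A)$ is infinite. Then there is a closed subspace $Y\subset X$ such that: (1) $A\subset Y$; (2) $\mathrm{dens}(Y)=\kappa$; (3) $Y$ is convex-transitive with respect to the subgroup $\mathcal{G}^0_Y=\{T|_Y : T\in\mathcal{G}^0,\ T(Y)=Y\}$ of the isometry group of $Y$; (4) $C\cap S_Y$ is norm-dense in $S_Y$.
   Context: $\mathcal{G}_X$ denotes the group of rotations of $X$, i.e. surjective linear isometries $X\to X$. The density character $\mathrm{dens}(T)$ of a topological space is the least cardinality of a dense subset. *)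

theory Defs
  imports "HOL-Analysis.Analysis"
begin

definition rotation :: "('a::real_normed_vector \<Rightarrow> 'a) \<Rightarrow> bool" where
  "rotation T \<longleftrightarrow> linear T \<and> (\<forall>x. norm (T x) = norm x) \<and> surj T"

definition rotation_subgroup :: "('a::real_normed_vector \<Rightarrow> 'a) set \<Rightarrow> bool" where
  "rotation_subgroup G \<longleftrightarrow> (\<forall>T\<in>G. rotation T) \<and> id \<in> G \<and>
     (\<forall>S\<in>G. \<forall>T\<in>G. S \<circ> T \<in> G) \<and> (\<forall>T\<in>G. inv T \<in> G)"

text \<open>Convex-transitivity of the closed subspace Y with respect to a family G of
  rotations of Y (given as maps on X restricted to Y): for every y in the unit sphere
  of Y, the closed convex hull of the orbit of y is the unit ball of Y.\<close>
definition convex_transitive_on :: "'a::real_normed_vector set \<Rightarrow> ('a \<Rightarrow> 'a) set \<Rightarrow> bool" where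
  "convex_transitive_on Y G \<longleftrightarrow>
     (\<forall>y\<in>Y. norm y = 1 \<longrightarrow> closure (convex hull {T y | T. T \<in> G}) = Y \<inter> cball 0 1)"

text \<open>D is a dense subset of S of minimal cardinality, i.e. card_of D is the density
  character dens(S).\<close>
definition dens_witness :: "'a::topological_space set \<Rightarrow> 'a set \<Rightarrow> bool" where
  "dens_witness S D \<longleftrightarrow> D \<subseteq> S \<and> S \<subseteq> closure D \<and>
     (\<forall>D'. D' \<subseteq> S \<and> S \<subseteq> closure D' \<longrightarrow> (card_of D, card_of D') \<in> ordLeq)"

end

theory Submission
  imports Defs
begin
unbundle cardinal_syntax

lemma cle_un: "infinite K \<Longrightarrow> |A| \<le>o |K| \<Longrightarrow> |B| \<le>o |K| \<Longrightarrow> |A \<union> B| \<le>o |K|"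
  using card_of_Un_ordLeq_infinite_Field[of "|K|" A B] by (simp add: Field_card_of card_of_card_order_on)

lemma cle_times: "infinite K \<Longrightarrow> |A| \<le>o |K| \<Longrightarrow> |B| \<le>o |K| \<Longrightarrow> |A \<times> B| \<le>o |K|"
  using card_of_Times_ordLeq_infinite_Field[of "|K|" A B] by (simp add: Field_card_of card_of_card_order_on)

lemma cle_countable: assumes "infinite K" "countable A" shows "|A| \<le>o |K|"
proof -
  from assms(2) obtain f :: "_ \<Rightarrow> nat" where "inj_on f A" unfolding countable_def by blast
  hence "|A| \<le>o |UNIV::nat set|" using card_of_ordLeq[of A "UNIV::nat set"] by blast
  moreover have "|UNIV::nat set| \<le>o |K|" using assms(1) infinite_iff_card_of_nat by blast
  ultimately show ?thesis using ordLeq_transitive by blast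
qed

lemma cle_finite: "infinite K \<Longrightarrow> finite A \<Longrightarrow> |A| \<le>o |K|"
  using cle_countable countable_finite by blast

lemma cle_image: "|A| \<le>o |K| \<Longrightarrow> |f ` A| \<le>o |K|"
  using card_of_image ordLeq_transitive by blast

lemma cle_mono: "A \<subseteq> B \<Longrightarrow> |B| \<le>o |K| \<Longrightarrow> |A| \<le>o |K|"
  using card_of_mono1 ordLeq_transitive by blast

lemma cle_UN: "infinite K \<Longrightarrow> card_of I \<le>o card_of K \<Longrightarrow> (\<And>i. i \<in> I \<Longrightarrow> card_of (A i) \<le>o card_of K) \<Longrightarrow> card_of (\<Union>i\<in>I. A i) \<le>o card_of K"
  using card_of_UNION_ordLeq_infinite by blast

definition TP :: "('a::real_normed_vector \<Rightarrow> 'a) set \<Rightarrow> 'a \<Rightarrow> 'a \<Rightarrow> nat \<Rightarrow> ('a \<Rightarrow> 'a) set \<Rightarrow> bool" where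
  "TP G0 y z n F \<longleftrightarrow> finite F \<and> F \<subseteq> G0 \<and> (\<exists>w\<in>convex hull ((\<lambda>T. T y) ` F). dist w z < inverse (real (Suc n)))"

definition Tset :: "('a::real_normed_vector \<Rightarrow> 'a) set \<Rightarrow> 'a \<Rightarrow> 'a \<Rightarrow> nat \<Rightarrow> ('a \<Rightarrow> 'a) set" where
  "Tset G0 y z n = (if \<exists>F. TP G0 y z n F then SOME F. TP G0 y z n F else {})"

lemma Tset_TP: "\<exists>F. TP G0 y z n F \<Longrightarrow> TP G0 y z n (Tset G0 y z n)"
  unfolding Tset_def by (simp add: someI_ex)

lemma Tset_fin: "finite (Tset G0 y z n) \<and> Tset G0 y z n \<subseteq> G0"
proof (cases "\<exists>F. TP G0 y z n F")
  case True
  then have "TP G0 y z n (Tset G0 y z n)" by (rule Tset_TP)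
  then show ?thesis unfolding TP_def by blast
qed (simp add: Tset_def)

definition Mset :: "('a::real_normed_vector \<Rightarrow> 'a) set \<Rightarrow> 'a set \<Rightarrow> ('a \<Rightarrow> 'a) set" where
  "Mset G0 S = (\<Union>y\<in>S. \<Union>z\<in>S. \<Union>n. Tset G0 y z n \<union> inv ` Tset G0 y z n)"

definition capprox :: "'a::real_normed_vector set \<Rightarrow> 'a \<Rightarrow> nat \<Rightarrow> 'a" where
  "capprox C x n = (SOME c. c \<in> C \<and> dist c x < inverse (real (Suc n)))"

definition Fstep :: "('a::real_normed_vector \<Rightarrow> 'a) set \<Rightarrow> 'a set \<Rightarrow> 'a set \<Rightarrow> 'a set" where
  "Fstep G0 C S = S \<union> (\<lambda>(x,y). x+y) ` (S\<times>S) \<union> (\<lambda>(q,x). real_of_rat q *\<^sub>R x) ` (UNIV \<times> S)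
     \<union> (\<lambda>x. x /\<^sub>R norm x) ` S \<union> (\<lambda>x. x /\<^sub>R max 1 (norm x)) ` S
     \<union> (\<lambda>(x,n). capprox C x n) ` (S \<times> (UNIV::nat set)) \<union> (\<lambda>(T,x). T x) ` (Mset G0 S \<times> S)"

lemma Mset_card: assumes K: "infinite K" and S: "|S| \<le>o |K|" shows "|Mset G0 S| \<le>o |K|"
proof -
  have N: "|UNIV::nat set| \<le>o |K|" by (rule cle_countable[OF K]) auto
  have "card_of (Tset G0 y z n \<union> inv ` Tset G0 y z n) \<le>o |K|" for y z n
    by (rule cle_finite[OF K]) (simp add: Tset_fin)
  then have "card_of (\<Union>n. Tset G0 y z n \<union> inv ` Tset G0 y z n) \<le>o |K|" for y z
    by (rule cle_UN[OF K N])
  then have "card_of (\<Union>z\<in>S. \<Union>n. Tset G0 y z n \<union> inv ` Tset G0 y z n) \<le>o |K|" for y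
    by (rule cle_UN[OF K S])
  then show ?thesis unfolding Mset_def by (rule cle_UN[OF K S])
qed

lemma Fstep_card: assumes K: "infinite K" and S: "|S| \<le>o |K|" shows "|Fstep G0 C S| \<le>o |K|"
proof -
  have N: "|UNIV::nat set| \<le>o |K|" "|UNIV::rat set| \<le>o |K|"
    by (rule cle_countable[OF K], simp)+
  have P1: "|(\<lambda>(x,y). x+y) ` (S\<times>S)| \<le>o |K|" by (rule cle_image, rule cle_times[OF K S S])
  have P2: "|(\<lambda>(q,x). real_of_rat q *\<^sub>R x) ` (UNIV \<times> S)| \<le>o |K|" by (rule cle_image, rule cle_times[OF K N(2) S])
  have P3: "|(\<lambda>x. x /\<^sub>R norm x) ` S| \<le>o |K|" "|(\<lambda>x. x /\<^sub>R max 1 (norm x)) ` S| \<le>o |K|"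
    by (rule cle_image, rule S)+
  have P4: "|(\<lambda>(x,n). capprox C x n) ` (S \<times> (UNIV::nat set))| \<le>o |K|" by (rule cle_image, rule cle_times[OF K S N(1)])
  have P5: "|(\<lambda>(T,x). T x) ` (Mset G0 S \<times> S)| \<le>o |K|" by (rule cle_image, rule cle_times[OF K Mset_card[OF K S] S])
  show ?thesis unfolding Fstep_def
    by (rule cle_un[OF K], rule cle_un[OF K], rule cle_un[OF K], rule cle_un[OF K], rule cle_un[OF K], rule cle_un[OF K])
       (rule S P1 P2 P3 P4 P5)+
qed

lemma Fstep_sub: "S \<subseteq> Fstep G0 C S" unfolding Fstep_def by blast

lemma Fiter_mono: "n \<le> m \<Longrightarrow> (Fstep G0 C ^^ n) S0 \<subseteq> (Fstep G0 C ^^ m) S0"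
proof (induction m)
  case 0 then show ?case by simp
next
  case (Suc m)
  then show ?case using Fstep_sub[of "(Fstep G0 C ^^ m) S0" G0 C]
    by (metis funpow.simps(2) le_Suc_eq o_apply order.trans order_refl)
qed

definition Uset where "Uset G0 C S0 = (\<Union>n. (Fstep G0 C ^^ n) S0)"

lemma Uset_card: assumes "infinite K" "|S0| \<le>o |K|" shows "|Uset G0 C S0| \<le>o |K|"
proof -
  have "|(Fstep G0 C ^^ n) S0| \<le>o |K|" for n
    by (induction n) (simp_all add: assms Fstep_card)
  moreover have "|UNIV::nat set| \<le>o |K|" by (rule cle_countable[OF assms(1)]) auto
  ultimately show ?thesis unfolding Uset_def
    by (intro cle_UN assms(1)) auto
qed

lemma Uset_ev: "x \<in> Uset G0 C S0 \<Longrightarrow> \<exists>n. \<forall>m\<ge>n. x \<in> (Fstep G0 C ^^ m) S0"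
  unfolding Uset_def using Fiter_mono by blast

lemma Uset_step: "(\<And>m. m \<ge> n \<Longrightarrow> x \<in> Fstep G0 C ((Fstep G0 C ^^ m) S0)) \<Longrightarrow> x \<in> Uset G0 C S0"
  unfolding Uset_def by (metis UN_I UNIV_I funpow.simps(2) o_apply order_refl)

lemma Fstep_mem:
  assumes "x \<in> S" "y \<in> S"
  shows "x + y \<in> Fstep G0 C S" "real_of_rat q *\<^sub>R x \<in> Fstep G0 C S"
    "x /\<^sub>R norm x \<in> Fstep G0 C S" "x /\<^sub>R max 1 (norm x) \<in> Fstep G0 C S"
    "capprox C x k \<in> Fstep G0 C S" "T \<in> Mset G0 S \<Longrightarrow> T x \<in> Fstep G0 C S"
proof -
  have "x + y \<in> (\<lambda>(x,y). x+y) ` (S\<times>S)" using assms by (intro image_eqI[where x="(x,y)"]) auto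
  then show "x + y \<in> Fstep G0 C S" unfolding Fstep_def by blast
  have "real_of_rat q *\<^sub>R x \<in> (\<lambda>(q,x). real_of_rat q *\<^sub>R x) ` (UNIV \<times> S)" using assms by (intro image_eqI[where x="(q,x)"]) auto
  then show "real_of_rat q *\<^sub>R x \<in> Fstep G0 C S" unfolding Fstep_def by blast
  have "x /\<^sub>R norm x \<in> (\<lambda>x. x /\<^sub>R norm x) ` S" using assms by blast
  then show "x /\<^sub>R norm x \<in> Fstep G0 C S" unfolding Fstep_def by blast
  have "x /\<^sub>R max 1 (norm x) \<in> (\<lambda>x. x /\<^sub>R max 1 (norm x)) ` S" using assms by blast
  then show "x /\<^sub>R max 1 (norm x) \<in> Fstep G0 C S" unfolding Fstep_def by blast
  have "capprox C x k \<in> (\<lambda>(x,n). capprox C x n) ` (S \<times> (UNIV::nat set))" using assms by (intro image_eqI[where x="(x,k)"]) auto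
  then show "capprox C x k \<in> Fstep G0 C S" unfolding Fstep_def by blast
  show "T x \<in> Fstep G0 C S" if "T \<in> Mset G0 S"
  proof -
    have "T x \<in> (\<lambda>(T,x). T x) ` (Mset G0 S \<times> S)" using assms that by (intro image_eqI[where x="(T,x)"]) auto
    then show ?thesis unfolding Fstep_def by blast
  qed
qed

lemma Uset_closed:
  assumes x: "x \<in> Uset G0 C S0" and y: "y \<in> Uset G0 C S0" and z: "z \<in> Uset G0 C S0"
  shows "x + y \<in> Uset G0 C S0" "real_of_rat q *\<^sub>R x \<in> Uset G0 C S0"
    "x /\<^sub>R norm x \<in> Uset G0 C S0" "x /\<^sub>R max 1 (norm x) \<in> Uset G0 C S0"
    "capprox C x k \<in> Uset G0 C S0"
    "T \<in> Tset G0 y z k \<Longrightarrow> T x \<in> Uset G0 C S0"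
    "T \<in> Tset G0 y z k \<Longrightarrow> inv T x \<in> Uset G0 C S0"
proof -
  obtain n1 n2 n3 where N: "\<forall>m\<ge>n1. x \<in> (Fstep G0 C ^^ m) S0" "\<forall>m\<ge>n2. y \<in> (Fstep G0 C ^^ m) S0"
      "\<forall>m\<ge>n3. z \<in> (Fstep G0 C ^^ m) S0"
    using Uset_ev[OF x] Uset_ev[OF y] Uset_ev[OF z] by blast
  let ?n = "max n1 (max n2 n3)"
  have H: "\<And>m. m \<ge> ?n \<Longrightarrow> x \<in> (Fstep G0 C ^^ m) S0 \<and> y \<in> (Fstep G0 C ^^ m) S0 \<and> z \<in> (Fstep G0 C ^^ m) S0"
    using N by auto
  show "x + y \<in> Uset G0 C S0"
    by (rule Uset_step[of ?n]) (use H in \<open>blast intro: Fstep_mem\<close>)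
  show "real_of_rat q *\<^sub>R x \<in> Uset G0 C S0"
    by (rule Uset_step[of ?n]) (use H in \<open>blast intro: Fstep_mem\<close>)
  show "x /\<^sub>R norm x \<in> Uset G0 C S0"
    by (rule Uset_step[of ?n]) (use H in \<open>blast intro: Fstep_mem\<close>)
  show "x /\<^sub>R max 1 (norm x) \<in> Uset G0 C S0"
    by (rule Uset_step[of ?n]) (use H in \<open>blast intro: Fstep_mem\<close>)
  show "capprox C x k \<in> Uset G0 C S0"
    by (rule Uset_step[of ?n]) (use H in \<open>blast intro: Fstep_mem\<close>)
  show "T x \<in> Uset G0 C S0" if "T \<in> Tset G0 y z k"
  proof (rule Uset_step[of ?n])
    fix m assume "m \<ge> ?n"
    then have "T \<in> Mset G0 ((Fstep G0 C ^^ m) S0)" "x \<in> (Fstep G0 C ^^ m) S0"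
      using H that unfolding Mset_def by blast+
    then show "T x \<in> Fstep G0 C ((Fstep G0 C ^^ m) S0)" by (metis Fstep_mem(6))
  qed
  show "inv T x \<in> Uset G0 C S0" if "T \<in> Tset G0 y z k"
  proof (rule Uset_step[of ?n])
    fix m assume "m \<ge> ?n"
    then have "inv T \<in> Mset G0 ((Fstep G0 C ^^ m) S0)" "x \<in> (Fstep G0 C ^^ m) S0"
      using H that unfolding Mset_def by blast+
    then show "inv T x \<in> Fstep G0 C ((Fstep G0 C ^^ m) S0)" by (metis Fstep_mem(6))
  qed
qed


lemma rot_bl: assumes "rotation T" shows "bounded_linear T"
proof -
  have L: "linear T" and N: "\<And>x. norm (T x) = norm x" using assms unfolding rotation_def by auto
  show ?thesis
  proof (rule bounded_linear_intro[where K=1])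
    show "T (x + y) = T x + T y" for x y using L by (simp add: linear_add)
    show "T (r *\<^sub>R x) = r *\<^sub>R T x" for r x using L by (simp add: linear_scale)
    show "norm (T x) \<le> norm x * 1" for x using N by simp
  qed
qed

lemma rot_cont: "rotation T \<Longrightarrow> continuous_on X T"
  using rot_bl linear_continuous_on by blast

lemma rot_dist: assumes "rotation T" shows "norm (T a - T b) = norm (a - b)"
proof -
  have "T a - T b = T (a - b)" using assms unfolding rotation_def by (simp add: linear_diff)
  then show ?thesis using assms unfolding rotation_def by simp
qed

lemma rot_img_closure: assumes "rotation T" "T ` U \<subseteq> U" shows "T ` closure U \<subseteq> closure U"
  by (rule image_closure_subset[OF rot_cont[OF assms(1)] closed_closure]) (use assms(2) closure_subset in blast)

lemma norm_normalize: fixes x u :: "'a::real_normed_vector"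
  assumes "x \<noteq> 0" "norm u = 1" shows "norm (x /\<^sub>R norm x - u) \<le> 2 * norm (x - u)"
proof -
  have nx: "norm x > 0" using assms by simp
  have "x /\<^sub>R norm x - x = (1 / norm x - 1) *\<^sub>R x" by (simp add: scaleR_diff_left divide_inverse)
  then have "norm (x /\<^sub>R norm x - x) = \<bar>1 / norm x - 1\<bar> * norm x" by simp
  also have "\<dots> = \<bar>(1 / norm x - 1) * norm x\<bar>" using nx by (simp add: abs_mult)
  also have "\<dots> = \<bar>1 - norm x\<bar>" using nx by (simp add: left_diff_distrib)
  also have "\<dots> = \<bar>norm u - norm x\<bar>" using assms by simp
  also have "\<dots> \<le> norm (x - u)" by (metis norm_minus_commute norm_triangle_ineq3)
  finally have 1: "norm (x /\<^sub>R norm x - x) \<le> norm (x - u)" .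
  have "norm (x /\<^sub>R norm x - u) \<le> norm (x /\<^sub>R norm x - x) + norm (x - u)"
    by (metis diff_add_cancel norm_triangle_ineq add_diff_eq)
  then show ?thesis using 1 by simp
qed

lemma norm_clip: fixes x u :: "'a::real_normed_vector"
  assumes "norm u \<le> 1" shows "norm (x /\<^sub>R max 1 (norm x) - u) \<le> 2 * norm (x - u)"
    and "norm (x /\<^sub>R max 1 (norm x)) \<le> 1"
proof -
  show "norm (x /\<^sub>R max 1 (norm x) - u) \<le> 2 * norm (x - u)"
  proof (cases "norm x \<le> 1")
    case True then show ?thesis by simp
  next
    case False
    then have m: "max 1 (norm x) = norm x" by simp
    have nx: "norm x > 0" using False by linarith
    have "x /\<^sub>R norm x - x = (1 / norm x - 1) *\<^sub>R x" by (simp add: scaleR_diff_left divide_inverse)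
    then have "norm (x /\<^sub>R norm x - x) = \<bar>1 / norm x - 1\<bar> * norm x" by simp
    also have "\<dots> = \<bar>(1 / norm x - 1) * norm x\<bar>" using nx by (simp add: abs_mult)
    also have "\<dots> = \<bar>1 - norm x\<bar>" using nx by (simp add: left_diff_distrib)
    also have "\<dots> = norm x - 1" using False by simp
    also have "\<dots> \<le> norm x - norm u" using assms by simp
    also have "\<dots> \<le> norm (x - u)" by (rule norm_triangle_ineq2)
    finally have 1: "norm (x /\<^sub>R norm x - x) \<le> norm (x - u)" .
    have "norm (x /\<^sub>R norm x - u) \<le> norm (x /\<^sub>R norm x - x) + norm (x - u)"
      by (metis diff_add_cancel norm_triangle_ineq add_diff_eq)
    then show ?thesis using 1 m by simp
  qed
  show "norm (x /\<^sub>R max 1 (norm x)) \<le> 1"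
    by (cases "norm x \<le> 1") (auto simp: divide_simps)
qed

lemma TP_exists:
  assumes CT: "convex_transitive_on (UNIV :: 'a::real_normed_vector set) G0"
    and y: "norm y = 1" and z: "norm z \<le> 1"
  shows "\<exists>F. TP G0 y z n F"
proof -
  have "z \<in> closure (convex hull {T y | T. T \<in> G0})" using CT y z unfolding convex_transitive_on_def by auto
  moreover have e: "inverse (real (Suc n)) > 0" by simp
  ultimately obtain w where w: "w \<in> convex hull {T y | T. T \<in> G0}" "dist w z < inverse (real (Suc n))"
    unfolding closure_approachable by blast
  then obtain S u where S: "finite S" "S \<subseteq> {T y | T. T \<in> G0}" "\<forall>x\<in>S. 0 \<le> u x" "sum u S = 1"
      "sum (\<lambda>v. u v *\<^sub>R v) S = w"
    unfolding convex_hull_explicit by blast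
  have "S \<subseteq> (\<lambda>T. T y) ` G0" using S(2) by blast
  then obtain F where F: "F \<subseteq> G0" "finite F" "S = (\<lambda>T. T y) ` F"
    using finite_subset_image[OF S(1)] by blast
  have "w \<in> convex hull S" unfolding convex_hull_explicit using S by blast
  then show ?thesis unfolding TP_def using F w(2) by blast
qed


theorem theorem2p4:
  fixes G0 :: "('a::banach \<Rightarrow> 'a) set" and C A :: "'a set" and DA :: "'a set"
  assumes "rotation_subgroup G0"
    and "convex_transitive_on (UNIV :: 'a set) G0"
    and "C \<subseteq> sphere 0 1" and "sphere 0 1 \<subseteq> closure C"
    and "subspace A" and "closed A"
    and "dens_witness A DA" and "infinite DA"
  shows "\<exists>Y DY. subspace Y \<and> closed Y \<and> A \<subseteq> Y \<and>
           dens_witness Y DY \<and> (card_of DY, card_of DA) \<in> ordIso \<and>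
           convex_transitive_on Y {(\<lambda>y. if y \<in> Y then T y else undefined) | T. T \<in> G0 \<and> T ` Y = Y} \<and>
           Y \<inter> sphere 0 1 \<subseteq> closure (C \<inter> Y \<inter> sphere 0 1)"
proof -
  have rotG: "\<And>T. T \<in> G0 \<Longrightarrow> rotation T" and invG: "\<And>T. T \<in> G0 \<Longrightarrow> inv T \<in> G0"
    using assms(1) unfolding rotation_subgroup_def by auto
  have infK: "infinite DA" by (rule assms(8))
  have DAA: "DA \<subseteq> A" "A \<subseteq> closure DA" using assms(7) unfolding dens_witness_def by auto
  define S0 where "S0 = insert 0 DA"
  define U where "U = Uset G0 C S0"
  define Y where "Y = closure U"
  have S0U: "S0 \<subseteq> U" unfolding U_def Uset_def
    by (metis UN_upper UNIV_I funpow_0)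
  have cardS0: "|S0| \<le>o |DA|" unfolding S0_def
    using cle_un[OF infK cle_finite[OF infK, of "{0}"] card_of_mono1[OF subset_refl, of DA]] by simp
  have cardU: "|U| \<le>o |DA|" unfolding U_def by (rule Uset_card[OF infK cardS0])
  have UY: "U \<subseteq> Y" unfolding Y_def by (rule closure_subset)
  have closedY: "closed Y" unfolding Y_def by simp
  have AY: "A \<subseteq> Y" using DAA S0U closure_mono[of DA U] unfolding Y_def S0_def by blast
  have Uadd: "\<And>x y. x \<in> U \<Longrightarrow> y \<in> U \<Longrightarrow> x + y \<in> U" unfolding U_def using Uset_closed(1) by blast
  have Urat: "\<And>x q. x \<in> U \<Longrightarrow> real_of_rat q *\<^sub>R x \<in> U" unfolding U_def using Uset_closed(2) by blast
  have Unorm: "\<And>x. x \<in> U \<Longrightarrow> x /\<^sub>R norm x \<in> U" unfolding U_def using Uset_closed(3) by blast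
  have Uclip: "\<And>x. x \<in> U \<Longrightarrow> x /\<^sub>R max 1 (norm x) \<in> U" unfolding U_def using Uset_closed(4) by blast
  have Ucap: "\<And>x k. x \<in> U \<Longrightarrow> capprox C x k \<in> U" unfolding U_def using Uset_closed(5) by blast
  have UT: "\<And>x y z k T. x \<in> U \<Longrightarrow> y \<in> U \<Longrightarrow> z \<in> U \<Longrightarrow> T \<in> Tset G0 y z k \<Longrightarrow> T x \<in> U \<and> inv T x \<in> U"
    unfolding U_def using Uset_closed(6,7) by blast

  have Yadd: "x + y \<in> Y" if xY: "x \<in> Y" and yY: "y \<in> Y" for x y
    unfolding Y_def closure_approachable
  proof (intro allI impI)
    fix e :: real assume e: "e > 0"
    obtain x' where x': "x' \<in> U" "dist x' x < e/2" using xY e unfolding Y_def closure_approachable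
      by (meson half_gt_zero)
    obtain y' where y': "y' \<in> U" "dist y' y < e/2" using yY e unfolding Y_def closure_approachable
      by (meson half_gt_zero)
    have "dist (x' + y') (x + y) \<le> dist x' x + dist y' y" by (rule dist_triangle_add)
    then show "\<exists>u\<in>U. dist u (x + y) < e" using x' y' Uadd by (intro bexI[of _ "x'+y'"]) auto
  qed
  have Yscale: "c *\<^sub>R x \<in> Y" if xY: "x \<in> Y" for c x
    unfolding Y_def closure_approachable_le
  proof (intro allI impI)
    fix e :: real assume e: "e > 0"
    define d2 where "d2 = e / (2 * (norm x + 1))"
    have d2: "d2 > 0" unfolding d2_def using e by (intro divide_pos_pos) (auto, smt (verit) norm_ge_zero)
    obtain r where r: "r \<in> \<rat>" "c < r" "r < c + d2" using Rats_dense_in_real[of c "c + d2"] d2 by auto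
    obtain q where q: "r = real_of_rat q" using r(1) Rats_cases by blast
    define d1 where "d1 = e / (2 * (\<bar>r\<bar> + 1))"
    have d1: "d1 > 0" unfolding d1_def using e by (intro divide_pos_pos; smt (verit) abs_ge_zero)
    obtain x' where x': "x' \<in> U" "dist x' x < d1" using xY d1 unfolding Y_def closure_approachable by blast
    have "norm (r *\<^sub>R x' - c *\<^sub>R x) = norm (r *\<^sub>R (x' - x) + (r - c) *\<^sub>R x)"
      by (simp add: algebra_simps)
    also have "\<dots> \<le> \<bar>r\<bar> * norm (x' - x) + \<bar>r - c\<bar> * norm x"
      by (metis norm_scaleR norm_triangle_ineq)
    also have "\<bar>r\<bar> * norm (x' - x) \<le> (\<bar>r\<bar> + 1) * d1"
      using x'(2) by (intro mult_mono) (auto simp: dist_norm)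
    also have "(\<bar>r\<bar> + 1) * d1 = e / 2" unfolding d1_def by (simp add: field_simps)
    also have "\<bar>r - c\<bar> * norm x \<le> d2 * (norm x + 1)"
      using r by (intro mult_mono) auto
    also have "d2 * (norm x + 1) = e / 2"
    proof -
      have "norm x + 1 \<noteq> 0" by (smt (verit) norm_ge_zero)
      then show ?thesis unfolding d2_def by (simp add: field_simps)
    qed
    finally have "dist (real_of_rat q *\<^sub>R x') (c *\<^sub>R x) \<le> e" by (simp add: dist_norm q)
    then show "\<exists>u\<in>U. dist u (c *\<^sub>R x) \<le> e" using Urat[OF x'(1)] by blast
  qed
  have subY: "subspace Y"
    by (rule subspaceI) (use S0U UY Yadd Yscale in \<open>auto simp: S0_def\<close>)

  define DS where "DS = {D. D \<subseteq> Y \<and> Y \<subseteq> closure D}"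
  have "U \<in> DS" unfolding DS_def Y_def using closure_subset by blast
  then have "card_of ` DS \<noteq> {}" by blast
  then obtain r where r: "r \<in> card_of ` DS" "\<forall>r' \<in> card_of ` DS. r \<le>o r'"
    using exists_minim_Well_order[of "card_of ` DS"] card_of_Well_order by blast
  then obtain DY where DY: "DY \<in> DS" "r = |DY|" by blast
  have dwY: "dens_witness Y DY" unfolding dens_witness_def
    using DY r unfolding DS_def by auto
  have DYU: "|DY| \<le>o |U|" using r DY \<open>U \<in> DS\<close> by auto
  have le1: "|DY| \<le>o |DA|" using ordLeq_transitive[OF DYU cardU] .
  have infDY: "infinite DY"
  proof
    assume f: "finite DY"
    then have "closure DY = DY" by (simp add: finite_imp_closed)
    then have "DA \<subseteq> DY" using DY(1) DAA AY unfolding DS_def by blast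
    then show False using f infK finite_subset by blast
  qed
  define pick where "pick d n = (SOME a. a \<in> A \<and> dist a d < inverse (real (Suc n)))" for d n
  define I where "I = {(d,n). d \<in> DY \<and> (\<exists>a\<in>A. dist a d < inverse (real (Suc n)))}"
  define E where "E = (\<lambda>(d,n). pick d n) ` I"
  have pickI: "pick d n \<in> A \<and> dist (pick d n) d < inverse (real (Suc n))" if "(d,n) \<in> I" for d n
  proof -
    have "\<exists>a. a \<in> A \<and> dist a d < inverse (real (Suc n))" using that unfolding I_def by blast
    then show ?thesis unfolding pick_def by (rule someI_ex)
  qed
  have EA: "E \<subseteq> A" unfolding E_def using pickI by auto
  have AE: "A \<subseteq> closure E"
  proof
    fix a assume aA: "a \<in> A"
    show "a \<in> closure E" unfolding closure_approachable
    proof (intro allI impI)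
      fix e :: real assume e: "e > 0"
      obtain n where n: "inverse (real (Suc n)) < e/2" using reals_Archimedean[of "e/2"] e by auto
      have "a \<in> closure DY" using aA AY DY(1) unfolding DS_def by blast
      then obtain d where d: "d \<in> DY" "dist d a < inverse (real (Suc n))"
        unfolding closure_approachable by (meson inverse_positive_iff_positive of_nat_0_less_iff zero_less_Suc)
      have "(d,n) \<in> I" unfolding I_def using d aA by (auto simp: dist_commute)
      then have p: "pick d n \<in> E" "dist (pick d n) d < inverse (real (Suc n))"
        using pickI unfolding E_def by force+
      have "dist (pick d n) a \<le> dist (pick d n) d + dist d a" by (rule dist_triangle)
      then show "\<exists>y\<in>E. dist y a < e" using p d n by (intro bexI[of _ "pick d n"]) auto
    qed
  qed
  have NDY: "|UNIV::nat set| \<le>o |DY|" by (rule cle_countable[OF infDY]) auto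
  have "|E| \<le>o |I|" unfolding E_def by (rule card_of_image)
  also have "|I| \<le>o |DY \<times> (UNIV::nat set)|" unfolding I_def by (rule card_of_mono1) auto
  also have "|DY \<times> (UNIV::nat set)| \<le>o |DY|"
    by (rule cle_times[OF infDY card_of_mono1[OF subset_refl] NDY])
  finally have EDY: "|E| \<le>o |DY|" .
  have "|DA| \<le>o |E|" using assms(7) EA AE unfolding dens_witness_def by blast
  then have le2: "|DA| \<le>o |DY|" using EDY ordLeq_transitive by blast
  have iso: "(card_of DY, card_of DA) \<in> ordIso" using le1 le2 ordIso_iff_ordLeq by blast

  have Cdense: "Y \<inter> sphere 0 1 \<subseteq> closure (C \<inter> Y \<inter> sphere 0 1)"
  proof
    fix u assume u: "u \<in> Y \<inter> sphere 0 1"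
    then have nu: "norm u = 1" by simp
    show "u \<in> closure (C \<inter> Y \<inter> sphere 0 1)" unfolding closure_approachable
    proof (intro allI impI)
      fix e :: real assume e: "e > 0"
      define d where "d = min (e/4) (1/2)"
      have d: "d > 0" "d \<le> e/4" "d \<le> 1/2" using e unfolding d_def by auto
      obtain x where x: "x \<in> U" "dist x u < d" using IntD1[OF u] d unfolding Y_def closure_approachable by blast
      have "norm x \<ge> norm u - norm (x - u)" using norm_triangle_ineq2[of u x] norm_minus_commute[of u x] by linarith
      moreover have "norm (x - u) < d" using x(2) by (simp add: dist_norm)
      ultimately have nx: "norm x > 0" using d nu by linarith
      define v where "v = x /\<^sub>R norm x"
      have vU: "v \<in> U" unfolding v_def using Unorm x by blast
      have nv: "norm v = 1" unfolding v_def using nx by simp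
      have "norm (v - u) \<le> 2 * norm (x - u)" unfolding v_def using norm_normalize nx nu by auto
      then have dv: "dist v u < 2 * d" using x by (simp add: dist_norm)
      obtain n where n: "inverse (real (Suc n)) < d" using reals_Archimedean d by blast
      have "v \<in> closure C" using assms(4) nv by auto
      then have "\<exists>c. c \<in> C \<and> dist c v < inverse (real (Suc n))"
        unfolding closure_approachable by (meson inverse_positive_iff_positive of_nat_0_less_iff zero_less_Suc)
      then have c: "capprox C v n \<in> C" "dist (capprox C v n) v < inverse (real (Suc n))"
        unfolding capprox_def by (metis (mono_tags, lifting) someI_ex)+
      have cY: "capprox C v n \<in> Y" using Ucap[OF vU] UY by blast
      have cS: "capprox C v n \<in> sphere 0 1" using c(1) assms(3) by blast
      have "dist (capprox C v n) u \<le> dist (capprox C v n) v + dist v u" by (rule dist_triangle)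
      then show "\<exists>y\<in>C \<inter> Y \<inter> sphere 0 1. dist y u < e"
        using c cY cS dv n d by (intro bexI[of _ "capprox C v n"]) auto
    qed
  qed

  have TY: "T \<in> G0 \<and> T ` Y = Y" if "y \<in> U" "z \<in> U" "T \<in> Tset G0 y z k" for T y z k
  proof -
    have TG: "T \<in> G0" using that Tset_fin by blast
    have r1: "rotation T" "rotation (inv T)" using rotG invG TG by auto
    have "T ` U \<subseteq> U" "inv T ` U \<subseteq> U" using UT that by blast+
    then have s: "T ` Y \<subseteq> Y" "inv T ` Y \<subseteq> Y" unfolding Y_def using rot_img_closure r1 by blast+
    have sT: "surj T" using r1 unfolding rotation_def by blast
    have "v \<in> T ` Y" if vY: "v \<in> Y" for v
    proof -
      have "inv T v \<in> Y" using s(2) vY by blast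
      moreover have "T (inv T v) = v" using sT by (rule surj_f_inv_f)
      ultimately show ?thesis by (metis image_eqI)
    qed
    then show ?thesis using TG s by blast
  qed

  have CT: "convex_transitive_on Y {(\<lambda>y. if y \<in> Y then T y else undefined) | T. T \<in> G0 \<and> T ` Y = Y}"
    unfolding convex_transitive_on_def
  proof (intro ballI impI)
    fix y assume yY: "y \<in> Y" and ny: "norm y = 1"
    define Orb where "Orb = {T y | T. T \<in> G0 \<and> T ` Y = Y}"
    have orb: "{T' y | T'. T' \<in> {(\<lambda>y. if y \<in> Y then T y else undefined) | T. T \<in> G0 \<and> T ` Y = Y}} = Orb"
      unfolding Orb_def using yY apply auto
      subgoal for T
        by (rule exI[of _ "\<lambda>v. if v \<in> Y then T v else undefined"]) auto
      done
    have OB: "Orb \<subseteq> Y \<inter> cball 0 1"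
    proof
      fix v assume "v \<in> Orb"
      then obtain T where T: "T \<in> G0" "T ` Y = Y" "v = T y" unfolding Orb_def by blast
      have "norm v = 1" using rotG[OF T(1)] ny T(3) unfolding rotation_def by simp
      then show "v \<in> Y \<inter> cball 0 1" using T yY by auto
    qed
    have cvx: "convex (Y \<inter> cball 0 1)" using subspace_imp_convex[OF subY] convex_cball convex_Int by blast
    have cl: "closed (Y \<inter> cball 0 1)" using closedY by (simp add: closed_Int)
    have sub1: "closure (convex hull Orb) \<subseteq> Y \<inter> cball 0 1"
      by (rule closure_minimal[OF hull_minimal[of Orb "Y \<inter> cball 0 1" convex, OF OB cvx] cl])
    have sub2: "Y \<inter> cball 0 1 \<subseteq> closure (convex hull Orb)"
    proof
      fix z assume z: "z \<in> Y \<inter> cball 0 1"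
      show "z \<in> closure (convex hull Orb)" unfolding closure_approachable
      proof (intro allI impI)
        fix e :: real assume e: "e > 0"
        define d where "d = min (e/8) (1/2)"
        have d: "d > 0" "d \<le> e/8" "d \<le> 1/2" using e unfolding d_def by auto
        obtain y' where y': "y' \<in> U" "dist y' y < d" using yY d unfolding Y_def closure_approachable by blast
        have "norm y' \<ge> norm y - norm (y' - y)" using norm_triangle_ineq2[of y y'] norm_minus_commute[of y y'] by linarith
        moreover have "norm (y' - y) < d" using y'(2) by (simp add: dist_norm)
        ultimately have ny': "norm y' > 0" using d ny by linarith
        define y2 where "y2 = y' /\<^sub>R norm y'"
        have y2U: "y2 \<in> U" unfolding y2_def using Unorm y' by blast
        have ny2: "norm y2 = 1" unfolding y2_def using ny' by simp
        have "norm (y2 - y) \<le> 2 * norm (y' - y)" unfolding y2_def using norm_normalize ny' ny by auto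
        then have dy2: "norm (y2 - y) < 2 * d" using y' by (simp add: dist_norm)
        obtain z' where z': "z' \<in> U" "dist z' z < d" using IntD1[OF z] d unfolding Y_def closure_approachable by blast
        define z2 where "z2 = z' /\<^sub>R max 1 (norm z')"
        have z2U: "z2 \<in> U" unfolding z2_def using Uclip z' by blast
        have nz: "norm z \<le> 1" using z by simp
        have nz2: "norm z2 \<le> 1" unfolding z2_def using norm_clip(2)[OF nz] by blast
        have "norm (z2 - z) \<le> 2 * norm (z' - z)" unfolding z2_def using norm_clip(1)[OF nz] by blast
        then have dz2: "norm (z2 - z) < 2 * d" using z' by (simp add: dist_norm)
        obtain n where n: "inverse (real (Suc n)) < d" using reals_Archimedean d by blast
        define F where "F = Tset G0 y2 z2 n"
        have "TP G0 y2 z2 n F" unfolding F_def by (rule Tset_TP[OF TP_exists[OF assms(2) ny2 nz2]])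
        then obtain w where w: "w \<in> convex hull ((\<lambda>T. T y2) ` F)" "dist w z2 < inverse (real (Suc n))"
          unfolding TP_def by blast
        have FG: "\<And>T. T \<in> F \<Longrightarrow> T \<in> G0 \<and> T ` Y = Y" unfolding F_def using TY y2U z2U by blast
        define P where "P = (\<Union>a\<in>convex hull ((\<lambda>T. T y) ` F). \<Union>b\<in>cball 0 (norm (y2 - y)). {a + b})"
        have cP: "convex P" unfolding P_def by (intro convex_sums convex_convex_hull convex_cball)
        have "(\<lambda>T. T y2) ` F \<subseteq> P"
        proof
          fix v assume "v \<in> (\<lambda>T. T y2) ` F"
          then obtain T where T: "T \<in> F" "v = T y2" by blast
          have "T y \<in> (\<lambda>T. T y) ` F" using T(1) by (rule imageI)
          then have a: "T y \<in> convex hull ((\<lambda>T. T y) ` F)" using hull_subset[of "(\<lambda>T. T y) ` F" convex] by (rule subsetD[rotated])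
          have "norm (T y2 - T y) = norm (y2 - y)" by (rule rot_dist[OF rotG[OF conjunct1[OF FG[OF T(1)]]]])
          then have b: "T y2 - T y \<in> cball 0 (norm (y2 - y))" by simp
          have "v = T y + (T y2 - T y)" using T by simp
          then show "v \<in> P" unfolding P_def using a b by blast
        qed
        then have "convex hull ((\<lambda>T. T y2) ` F) \<subseteq> P" by (rule hull_minimal[of _ P convex, OF _ cP])
        then obtain a b where ab: "a \<in> convex hull ((\<lambda>T. T y) ` F)" "norm b \<le> norm (y2 - y)" "w = a + b"
          using w(1) unfolding P_def by auto
        have "(\<lambda>T. T y) ` F \<subseteq> Orb" unfolding Orb_def using FG by blast
        then have aO: "a \<in> convex hull Orb" using ab(1) hull_mono by blast
        have "norm (a - z) = norm ((w - z2) + (z2 - z) - b)" using ab(3) by (simp add: algebra_simps)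
        also have "\<dots> \<le> norm ((w - z2) + (z2 - z)) + norm b" by (rule norm_triangle_ineq4)
        also have "\<dots> \<le> norm (w - z2) + norm (z2 - z) + norm b"
          using norm_triangle_ineq[of "w - z2" "z2 - z"] by linarith
        finally have na: "norm (a - z) \<le> norm (w - z2) + norm (z2 - z) + norm b" .
        have nw: "norm (w - z2) < inverse (real (Suc n))" using w(2) by (simp add: dist_norm)
        have "norm (a - z) < e" using na nw dz2 ab(2) dy2 n d by linarith
        then have "dist a z < e" by (simp add: dist_norm)
        then show "\<exists>y\<in>convex hull Orb. dist y z < e" using aO by blast
      qed
    qed
    show "closure (convex hull {T' y | T'. T' \<in> {(\<lambda>y. if y \<in> Y then T y else undefined) | T. T \<in> G0 \<and> T ` Y = Y}}) = Y \<inter> cball 0 1"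
      unfolding orb using sub1 sub2 by blast
  qed

  show ?thesis
    using subY closedY AY dwY iso CT Cdense by blast
qed

end
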